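(* Assume $\bm\lambda\neq0$ and $\bm\mu\neq0$. Then $M_1(\bm\lambda,\bm\mu)$ is a cyclic (generated by $w$) but reducible $\widehat{\mathfrak{gl}}$-module, i.e. there is a nonzero proper subspace of $M_1(\bm\lambda,\bm\mu)$ invariant under all $E_{i,j}$.
   Context: Let $\widehat{\mathcal A}$ be the Weyl algebra: the unital associative complex algebra generated by $a(r),a^*(r)$ ($r\in\mathbb Z$) with relations $[a(r),a(s)]=[a^*(r),a^*(s)]=0$ and $[a(r),a^*(s)]=\delta_{r+s,0}$. Fix integers $n\ge 0$, $m\ge 1$, $\bm\lambda=(\lambda_0,\dots,\lambda_n)\in\mathbb C^{n+1}$, $\bm\mu=(\mu_1,\dots,\mu_m)\in\mathbb C^m$, and set $\lambda_i=0$ for $i>n$, $\mu_j=0$ for $j>m$. The Whittaker module $M_1(\bm\lambda,\bm\mu)=\widehat{\mathcal A}/\mathcal I$, where $\mathcal I$ is the left ideal generated by $a(i)-\lambda_i$ ($i\ge 0$) and $a^*(j)-\mu_j$ ($j\ge 1$); $w=w_{\bm\lambda,\bm\mu}$ denotes the image of $1$. Normal ordering: $:a(i)a^*(j):$ equals $a^*(j)a(i)$ if $i\ge 0$ and $j\le 0$, and equals $a(i)a^*(j)$ otherwise. For $i,j\in\mathbb Z$, $E_{i,j}:=\,:a(-i)a^*(j):$, an operator on $M_1(\bm\lambda,\bm\mu)$; these give $M_1(\bm\lambda,\bm\mu)$ the structure of a $\widehat{\mathfrak{gl}}$-module of central charge $-1$, and submodules/generation refer to invariance under all $E_{i,j}$.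 *)

theory Defs
  imports Main "HOL.Complex"
begin

text \<open>
  Literal model of the Whittaker module M_1(lambda,mu) = W / I, where W is the Weyl
  algebra = (free algebra on the generators a(r), a*(r)) / (two-sided ideal J of the
  commutation relations).  Pulling back to the free algebra F, we have
  M_1 = F / L where L = J + (left ideal of F generated by a(i) - lambda_i (i >= 0)
  and a*(j) - mu_j (j >= 1)).  Elements of F are finitely supported functions
  from words in the generators to complex coefficients.  A subspace of M_1 is the
  same as a subspace V of F with L \<subseteq> V.
\<close>

datatype gen = A int | As int   \<comment> \<open>A r = a(r), As r = a*(r)\<close>

type_synonym felem = "gen list \<Rightarrow> complex"

definition FA :: "felem set" where
  "FA = {f. finite {v. f v \<noteq> 0}}"

definition mon :: "gen list \<Rightarrow> felem" where
  "mon w = (\<lambda>v. if v = w then 1 else 0)"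

definition fadd :: "felem \<Rightarrow> felem \<Rightarrow> felem" where
  "fadd f g = (\<lambda>v. f v + g v)"

definition fscale :: "complex \<Rightarrow> felem \<Rightarrow> felem" where
  "fscale c f = (\<lambda>v. c * f v)"

definition lmul :: "gen \<Rightarrow> felem \<Rightarrow> felem" where
  "lmul g f = (\<lambda>v. case v of [] \<Rightarrow> 0 | h # v' \<Rightarrow> if h = g then f v' else 0)"

definition rmul :: "gen \<Rightarrow> felem \<Rightarrow> felem" where
  "rmul g f = (\<lambda>v. if v \<noteq> [] \<and> last v = g then f (butlast v) else 0)"

inductive_set weylJ :: "felem set" where
  rel_aa: "(\<lambda>v. mon [A r, A s] v - mon [A s, A r] v) \<in> weylJ"
| rel_ss: "(\<lambda>v. mon [As r, As s] v - mon [As s, As r] v) \<in> weylJ"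
| rel_as: "(\<lambda>v. mon [A r, As s] v - mon [As s, A r] v
              - (if r + s = 0 then 1 else 0) * mon [] v) \<in> weylJ"
| zero: "(\<lambda>v. 0) \<in> weylJ"
| add: "f \<in> weylJ \<Longrightarrow> g \<in> weylJ \<Longrightarrow> fadd f g \<in> weylJ"
| scale: "f \<in> weylJ \<Longrightarrow> fscale c f \<in> weylJ"
| left: "f \<in> weylJ \<Longrightarrow> lmul x f \<in> weylJ"
| right: "f \<in> weylJ \<Longrightarrow> rmul x f \<in> weylJ"

text \<open>preimage in the free algebra of the left ideal I; lam i = lambda_i (i >= 0),
  mu j = mu_j (j >= 1; mu 0 is unused)\<close>
inductive_set whitL :: "(nat \<Rightarrow> complex) \<Rightarrow> (nat \<Rightarrow> complex) \<Rightarrow> felem set"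
  for lam mu where
  weyl: "f \<in> weylJ \<Longrightarrow> f \<in> whitL lam mu"
| gen_a: "(\<lambda>v. mon [A (int i)] v - lam i * mon [] v) \<in> whitL lam mu"
| gen_as: "j \<ge> 1 \<Longrightarrow> (\<lambda>v. mon [As (int j)] v - mu j * mon [] v) \<in> whitL lam mu"
| add: "f \<in> whitL lam mu \<Longrightarrow> g \<in> whitL lam mu \<Longrightarrow> fadd f g \<in> whitL lam mu"
| scale: "f \<in> whitL lam mu \<Longrightarrow> fscale c f \<in> whitL lam mu"
| left: "f \<in> whitL lam mu \<Longrightarrow> lmul x f \<in> whitL lam mu"

text \<open>action of E_{i,j} = :a(-i) a*(j): (left multiplication by the normally ordered product)\<close>
definition Eact :: "int \<Rightarrow> int \<Rightarrow> felem \<Rightarrow> felem" where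
  "Eact i j f = (if - i \<ge> 0 \<and> j \<le> 0 then lmul (As j) (lmul (A (- i)) f)
                 else lmul (A (- i)) (lmul (As j) f))"

definition fsubspace :: "felem set \<Rightarrow> bool" where
  "fsubspace V \<longleftrightarrow> (\<lambda>v. 0) \<in> V \<and> (\<forall>f\<in>V. \<forall>g\<in>V. fadd f g \<in> V) \<and> (\<forall>c. \<forall>f\<in>V. fscale c f \<in> V)"

text \<open>preimage of the submodule generated by w = 1 + L\<close>
inductive_set cycsub :: "(nat \<Rightarrow> complex) \<Rightarrow> (nat \<Rightarrow> complex) \<Rightarrow> felem set"
  for lam mu where
  base: "mon [] \<in> cycsub lam mu"
| ideal: "f \<in> whitL lam mu \<Longrightarrow> f \<in> cycsub lam mu"
| add: "f \<in> cycsub lam mu \<Longrightarrow> g \<in> cycsub lam mu \<Longrightarrow> fadd f g \<in> cycsub lam mu"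
| scale: "f \<in> cycsub lam mu \<Longrightarrow> fscale c f \<in> cycsub lam mu"
| act: "f \<in> cycsub lam mu \<Longrightarrow> Eact i j f \<in> cycsub lam mu"

end

theory Submission imports Defs "HOL-Library.Multiset" begin



definition supp :: "felem \<Rightarrow> gen list set" where "supp f = {v. f v \<noteq> 0}"

lemma FA_iff: "f \<in> FA \<longleftrightarrow> finite (supp f)" by (simp add: FA_def supp_def)

lemma lmul_mon: "lmul x (mon w) = mon (x # w)"
  by (auto simp: lmul_def mon_def fun_eq_iff split: list.split)

lemma rmul_mon: "rmul x (mon w) = mon (w @ [x])"
proof (rule ext)
  fix v show "rmul x (mon w) v = mon (w @ [x]) v"
    by (cases v rule: rev_cases) (auto simp: rmul_def mon_def)
qed

fun lmull :: "gen list \<Rightarrow> felem \<Rightarrow> felem" where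
  "lmull [] f = f" | "lmull (x#xs) f = lmul x (lmull xs f)"
fun rmull :: "gen list \<Rightarrow> felem \<Rightarrow> felem" where
  "rmull [] f = f" | "rmull (x#xs) f = rmull xs (rmul x f)"

lemma lmull_mon: "lmull p (mon w) = mon (p @ w)"
  by (induction p) (auto simp: lmul_mon)
lemma rmull_mon: "rmull q (mon w) = mon (w @ q)"
  by (induction q arbitrary: w) (auto simp: rmul_mon)

lemma lmul_lin3: "lmul x (\<lambda>v. f v - g v - c * h v) = (\<lambda>v. lmul x f v - lmul x g v - c * lmul x h v)"
  by (auto simp: lmul_def fun_eq_iff split: list.split)
lemma rmul_lin3: "rmul x (\<lambda>v. f v - g v - c * h v) = (\<lambda>v. rmul x f v - rmul x g v - c * rmul x h v)"
  by (auto simp: rmul_def fun_eq_iff)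
lemma lmull_lin3: "lmull p (\<lambda>v. f v - g v - c * h v) = (\<lambda>v. lmull p f v - lmull p g v - c * lmull p h v)"
  by (induction p) (auto simp: lmul_lin3)
lemma rmull_lin3: "rmull q (\<lambda>v. f v - g v - c * h v) = (\<lambda>v. rmull q f v - rmull q g v - c * rmull q h v)"
  by (induction q arbitrary: f g h) (auto simp: rmul_lin3)
lemma lmul_lin2: "lmul x (\<lambda>v. f v - c * h v) = (\<lambda>v. lmul x f v - c * lmul x h v)"
  by (auto simp: lmul_def fun_eq_iff split: list.split)
lemma lmull_lin2: "lmull p (\<lambda>v. f v - c * h v) = (\<lambda>v. lmull p f v - c * lmull p h v)"
  by (induction p) (auto simp: lmul_lin2)

lemma weyl_ctx: "f \<in> weylJ \<Longrightarrow> lmull p (rmull q f) \<in> weylJ"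
proof -
  assume f: "f \<in> weylJ"
  have "rmull q f \<in> weylJ" using f
    by (induction q arbitrary: f) (auto intro: weylJ.right)
  then show ?thesis by (induction p) (auto intro: weylJ.left)
qed

lemma whit_lmull: "f \<in> whitL lam mu \<Longrightarrow> lmull p f \<in> whitL lam mu"
  by (induction p) (auto intro: whitL.left)

fun cc :: "gen \<Rightarrow> gen \<Rightarrow> complex" where
  "cc (A r) (As s) = (if r + s = 0 then 1 else 0)"
| "cc (As s) (A r) = - (if r + s = 0 then 1 else 0)"
| "cc _ _ = 0"

lemma weyl_swap: "(\<lambda>v. mon [x,g] v - mon [g,x] v - cc x g * mon [] v) \<in> weylJ"
proof (cases x; cases g)
  fix r s assume "x = A r" "g = A s"
  then show ?thesis using weylJ.rel_aa[of r s] by simp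
next
  fix r s assume "x = As r" "g = As s"
  then show ?thesis using weylJ.rel_ss[of r s] by simp
next
  fix r s assume "x = A r" "g = As s"
  then show ?thesis using weylJ.rel_as[of r s] by simp
next
  fix r s assume "x = As r" "g = A s"
  have "fscale (-1) (\<lambda>v. mon [A s, As r] v - mon [As r, A s] v
              - (if s + r = 0 then 1 else 0) * mon [] v) \<in> weylJ"
    by (rule weylJ.scale[OF weylJ.rel_as])
  moreover have "fscale (-1) (\<lambda>v. mon [A s, As r] v - mon [As r, A s] v
              - (if s + r = 0 then 1 else 0) * mon [] v) = 
     (\<lambda>v. mon [x,g] v - mon [g,x] v - cc x g * mon [] v)"
    using \<open>x = As r\<close> \<open>g = A s\<close> by (auto simp: fscale_def fun_eq_iff algebra_simps)
  ultimately show ?thesis by simp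
qed

lemma weyl_swap_ctx: "(\<lambda>v. mon (p @ [x,g] @ q) v - mon (p @ [g,x] @ q) v - cc x g * mon (p @ q) v) \<in> weylJ"
  using weyl_ctx[OF weyl_swap[of x g], of p q]
  by (simp add: rmull_lin3 lmull_lin3 rmull_mon lmull_mon)

lemma cyc_comb: "f \<in> cycsub lam mu \<Longrightarrow> g \<in> cycsub lam mu \<Longrightarrow> (\<lambda>v. a * f v + b * g v) \<in> cycsub lam mu"
proof -
  assume "f \<in> cycsub lam mu" "g \<in> cycsub lam mu"
  then have "fadd (fscale a f) (fscale b g) \<in> cycsub lam mu"
    by (auto intro: cycsub.add cycsub.scale)
  then show ?thesis by (simp add: fadd_def fscale_def)
qed

lemma cyc_eq: "f \<in> cycsub lam mu \<Longrightarrow> f = g \<Longrightarrow> g \<in> cycsub lam mu" by simp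

lemma weyl_cyc: "f \<in> weylJ \<Longrightarrow> f \<in> cycsub lam mu"
  by (rule cycsub.ideal[OF whitL.weyl])

lemma cyc_swap:
  assumes "mon (p @ [x,g] @ q) \<in> cycsub lam mu" "mon (p @ q) \<in> cycsub lam mu"
  shows "mon (p @ [g,x] @ q) \<in> cycsub lam mu"
proof -
  have D: "(\<lambda>v. mon (p @ [g,x] @ q) v - mon (p @ [x,g] @ q) v - cc g x * mon (p @ q) v) \<in> cycsub lam mu"
    by (rule weyl_cyc[OF weyl_swap_ctx])
  have "(\<lambda>v. 1 * (\<lambda>v. mon (p @ [g,x] @ q) v - mon (p @ [x,g] @ q) v - cc g x * mon (p @ q) v) v
        + 1 * mon (p @ [x,g] @ q) v) \<in> cycsub lam mu"
    by (rule cyc_comb[OF D assms(1)])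
  then have "(\<lambda>v. 1 * (\<lambda>v. 1 * (\<lambda>v. mon (p @ [g,x] @ q) v - mon (p @ [x,g] @ q) v - cc g x * mon (p @ q) v) v
        + 1 * mon (p @ [x,g] @ q) v) v + cc g x * mon (p @ q) v) \<in> cycsub lam mu"
    by (rule cyc_comb[OF _ assms(2)])
  then show ?thesis by (simp add: fun_eq_iff)
qed

lemma comm:
  "\<forall>w. length w < length u \<longrightarrow> mon (p @ w) \<in> cycsub lam mu \<Longrightarrow>
   (\<lambda>v. mon (p @ u @ [g]) v - mon (p @ g # u) v) \<in> cycsub lam mu"
proof (induction u arbitrary: p)
  case Nil
  have "(\<lambda>v. 0) \<in> cycsub lam mu" by (rule weyl_cyc[OF weylJ.zero])
  then show ?case by simp
next
  case (Cons x u)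
  have h: "\<forall>w. length w < length u \<longrightarrow> mon ((p @ [x]) @ w) \<in> cycsub lam mu"
    using Cons.prems by (metis append.assoc append_Cons append_Nil length_Cons not_less_eq)
  have D1: "(\<lambda>v. mon ((p @ [x]) @ u @ [g]) v - mon ((p @ [x]) @ g # u) v) \<in> cycsub lam mu"
    by (rule Cons.IH[OF h])
  have E: "(\<lambda>v. mon (p @ [x,g] @ u) v - mon (p @ [g,x] @ u) v - cc x g * mon (p @ u) v) \<in> cycsub lam mu"
    by (rule weyl_cyc[OF weyl_swap_ctx])
  have M: "mon (p @ u) \<in> cycsub lam mu" using Cons.prems by simp
  have "(\<lambda>v. 1 * (\<lambda>v. 1 * (\<lambda>v. mon ((p @ [x]) @ u @ [g]) v - mon ((p @ [x]) @ g # u) v) v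
        + 1 * (\<lambda>v. mon (p @ [x,g] @ u) v - mon (p @ [g,x] @ u) v - cc x g * mon (p @ u) v) v) v
        + cc x g * mon (p @ u) v) \<in> cycsub lam mu"
    by (rule cyc_comb[OF cyc_comb[OF D1 E] M])
  then show ?case by (simp add: fun_eq_iff)
qed

lemma all_mon_cyc:
  assumes lk: "lam k \<noteq> 0" and ml: "mu l \<noteq> 0" "l \<ge> 1"
  shows "mon w \<in> cycsub lam mu"
proof (induction "length w" arbitrary: w rule: less_induct)
  case less
  show ?case
  proof (cases w)
    case Nil then show ?thesis by (simp add: cycsub.base)
  next
    case (Cons g u)
    have IH: "\<And>w'. length w' \<le> length u \<Longrightarrow> mon w' \<in> cycsub lam mu"
      using less Cons by auto
    have Mu: "mon u \<in> cycsub lam mu" using IH by simp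
    show ?thesis
    proof (cases g)
      case (As s)
      have h1: "(\<lambda>v. mon (As s # u @ [A (int k)]) v - lam k * mon (As s # u) v) \<in> cycsub lam mu"
        using cycsub.ideal[OF whit_lmull[OF whitL.gen_a[where i=k and lam=lam and mu=mu]], of "As s # u"]
        by (simp add: lmull_lin2 lmull_mon)
      have h2: "(\<lambda>v. mon ([As s] @ u @ [A (int k)]) v - mon ([As s] @ A (int k) # u) v) \<in> cycsub lam mu"
        by (rule comm) (auto intro: IH)
      have h3: "mon (As s # A (int k) # u) \<in> cycsub lam mu"
      proof (cases "s \<le> 0")
        case True
        have "Eact (- int k) s (mon u) \<in> cycsub lam mu" by (rule cycsub.act[OF Mu])
        then show ?thesis using True by (simp add: Eact_def lmul_mon)
      next
        case False
        have "Eact (- int k) s (mon u) \<in> cycsub lam mu" by (rule cycsub.act[OF Mu])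
        then have "mon ([] @ [A (int k), As s] @ u) \<in> cycsub lam mu"
          using False by (simp add: Eact_def lmul_mon)
        from cyc_swap[OF this] Mu show ?thesis by simp
      qed
      have "(\<lambda>v. (1/lam k) * (\<lambda>v. 1 * (\<lambda>v. 1 * (\<lambda>v. mon ([As s] @ u @ [A (int k)]) v - mon ([As s] @ A (int k) # u) v) v
           + 1 * mon (As s # A (int k) # u) v) v + (-1) * 
           (\<lambda>v. mon (As s # u @ [A (int k)]) v - lam k * mon (As s # u) v) v) v + 0 * mon u v) \<in> cycsub lam mu"
        by (rule cyc_comb[OF cyc_comb[OF cyc_comb[OF h2 h3] h1] Mu])
      then show ?thesis using Cons As lk by (simp add: fun_eq_iff)
    next
      case (A r)
      have h1: "(\<lambda>v. mon (A r # u @ [As (int l)]) v - mu l * mon (A r # u) v) \<in> cycsub lam mu"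
        using cycsub.ideal[OF whit_lmull[OF whitL.gen_as[where j=l and lam=lam and mu=mu]], of "A r # u"] ml
        by (simp add: lmull_lin2 lmull_mon)
      have h2: "(\<lambda>v. mon ([A r] @ u @ [As (int l)]) v - mon ([A r] @ As (int l) # u) v) \<in> cycsub lam mu"
        by (rule comm) (auto intro: IH)
      have h3: "mon (A r # As (int l) # u) \<in> cycsub lam mu"
      proof -
        have "Eact (- r) (int l) (mon u) \<in> cycsub lam mu" by (rule cycsub.act[OF Mu])
        then show ?thesis using ml by (simp add: Eact_def lmul_mon)
      qed
      have "(\<lambda>v. (1/mu l) * (\<lambda>v. 1 * (\<lambda>v. 1 * (\<lambda>v. mon ([A r] @ u @ [As (int l)]) v - mon ([A r] @ As (int l) # u) v) v
           + 1 * mon (A r # As (int l) # u) v) v + (-1) * 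
           (\<lambda>v. mon (A r # u @ [As (int l)]) v - mu l * mon (A r # u) v) v) v + 0 * mon u v) \<in> cycsub lam mu"
        by (rule cyc_comb[OF cyc_comb[OF cyc_comb[OF h2 h3] h1] Mu])
      then show ?thesis using Cons A ml by (simp add: fun_eq_iff)
    qed
  qed
qed




lemma supp_sub_FA: "finite S \<Longrightarrow> supp f \<subseteq> S \<Longrightarrow> f \<in> FA"
  by (auto simp: FA_iff intro: finite_subset)

lemma FA_fadd: "f \<in> FA \<Longrightarrow> g \<in> FA \<Longrightarrow> fadd f g \<in> FA"
  by (rule supp_sub_FA[of "supp f \<union> supp g"]) (auto simp: FA_iff supp_def fadd_def)
lemma FA_fscale: "f \<in> FA \<Longrightarrow> fscale c f \<in> FA"
  by (rule supp_sub_FA[of "supp f"]) (auto simp: FA_iff supp_def fscale_def)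
lemma supp_lmul: "supp (lmul x f) \<subseteq> Cons x ` supp f"
proof
  fix v assume "v \<in> supp (lmul x f)"
  then show "v \<in> Cons x ` supp f"
    by (cases v) (auto simp: supp_def lmul_def split: if_splits)
qed
lemma supp_rmul: "supp (rmul x f) \<subseteq> (\<lambda>w. w @ [x]) ` supp f"
proof
  fix v assume "v \<in> supp (rmul x f)"
  then have "v \<noteq> []" "last v = x" "f (butlast v) \<noteq> 0" by (auto simp: supp_def rmul_def split: if_splits)
  then show "v \<in> (\<lambda>w. w @ [x]) ` supp f"
    by (intro image_eqI[of _ _ "butlast v"]) (auto simp: supp_def)
qed
lemma FA_lmul: "f \<in> FA \<Longrightarrow> lmul x f \<in> FA"
  by (rule supp_sub_FA[OF _ supp_lmul]) (auto simp: FA_iff)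
lemma FA_rmul: "f \<in> FA \<Longrightarrow> rmul x f \<in> FA"
  by (rule supp_sub_FA[OF _ supp_rmul]) (auto simp: FA_iff)
lemma FA_mon3: "(\<lambda>v. mon a v - mon b v - c * mon d v) \<in> FA"
  by (rule supp_sub_FA[of "{a,b,d}"]) (auto simp: supp_def mon_def)
lemma FA_mon2: "(\<lambda>v. mon a v - c * mon d v) \<in> FA"
  by (rule supp_sub_FA[of "{a,d}"]) (auto simp: supp_def mon_def)
lemma FA_mon: "mon a \<in> FA"
  by (rule supp_sub_FA[of "{a}"]) (auto simp: supp_def mon_def)
lemma FA_zero: "(\<lambda>v. 0) \<in> FA"
  by (rule supp_sub_FA[of "{}"]) (auto simp: supp_def)

lemma weylJ_FA: "f \<in> weylJ \<Longrightarrow> f \<in> FA"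
proof (induction rule: weylJ.induct)
  case (rel_aa r s) then show ?case using FA_mon3[of _ _ 0] by simp
next
  case (rel_ss r s) then show ?case using FA_mon3[of _ _ 0] by simp
next
  case (rel_as r s) then show ?case by (rule FA_mon3)
qed (auto intro: FA_mon3 FA_zero FA_fadd FA_fscale FA_lmul FA_rmul)

lemma whitL_FA: "f \<in> whitL lam mu \<Longrightarrow> f \<in> FA"
  by (induction rule: whitL.induct) (auto intro: weylJ_FA FA_mon2 FA_fadd FA_fscale FA_lmul)

lemma cyc_FA: "f \<in> cycsub lam mu \<Longrightarrow> f \<in> FA"
  by (induction rule: cycsub.induct) (auto intro: whitL_FA FA_mon FA_fadd FA_fscale FA_lmul simp: Eact_def)

lemma cyc_sum:
  assumes "finite S" "\<And>w. mon w \<in> cycsub lam mu"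
  shows "(\<lambda>v. \<Sum>w\<in>S. c w * mon w v) \<in> cycsub lam mu"
  using assms(1)
proof (induction S rule: finite_induct)
  case empty then show ?case using weyl_cyc[OF weylJ.zero] by simp
next
  case (insert x F)
  have "(\<lambda>v. 1 * (\<lambda>v. \<Sum>w\<in>F. c w * mon w v) v + c x * mon x v) \<in> cycsub lam mu"
    by (rule cyc_comb[OF insert.IH assms(2)])
  then show ?case using insert by (simp add: add.commute)
qed

lemma FA_cyc:
  assumes "f \<in> FA" "\<And>w. mon w \<in> cycsub lam mu"
  shows "f \<in> cycsub lam mu"
proof -
  have "(\<lambda>v. \<Sum>w\<in>supp f. f w * mon w v) \<in> cycsub lam mu"
    using assms by (intro cyc_sum) (auto simp: FA_iff)
  moreover have "(\<lambda>v. \<Sum>w\<in>supp f. f w * mon w v) = f"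
  proof
    fix v
    have "(\<Sum>w\<in>supp f. f w * mon w v) = (\<Sum>w\<in>supp f. if w = v then f v else 0)"
      by (rule sum.cong) (auto simp: mon_def)
    also have "\<dots> = f v" using assms(1) by (auto simp: FA_iff supp_def)
    finally show "(\<Sum>w\<in>supp f. f w * mon w v) = f v" .
  qed
  ultimately show ?thesis by simp
qed




type_synonym poly = "gen multiset \<Rightarrow> complex"

definition mulv :: "gen \<Rightarrow> poly \<Rightarrow> poly" where
  "mulv u p = (\<lambda>M. if u \<in># M then p (M - {#u#}) else 0)"
definition dd :: "gen \<Rightarrow> poly \<Rightarrow> poly" where
  "dd u p = (\<lambda>M. of_nat (count M u + 1) * p (add_mset u M))"

lemma mult_mult: "mulv u (mulv v p) = mulv v (mulv u p)"
proof (rule ext)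
  fix M show "mulv u (mulv v p) M = mulv v (mulv u p) M"
  proof (cases "u = v")
    case False
    show ?thesis
    proof (cases "u \<in># M \<and> v \<in># M")
      case True
      then obtain M' where "M = add_mset u M'" by (metis mset_add)
      moreover with True False have "v \<in># M'" by auto
      then obtain M'' where "M' = add_mset v M''" by (metis mset_add)
      ultimately show ?thesis using False by (simp add: mulv_def add_mset_commute)
    next
      case nb: False
      then show ?thesis by (auto simp: mulv_def in_diff_count)
    qed
  qed simp
qed

lemma dd_mult_ne: "u \<noteq> v \<Longrightarrow> dd v (mulv u p) = mulv u (dd v p)"
proof (rule ext)
  fix M assume ne: "u \<noteq> v"
  show "dd v (mulv u p) M = mulv u (dd v p) M"
  proof (cases "u \<in># M")
    case True
    then obtain M' where M': "M = add_mset u M'" by (metis mset_add)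
    have e: "add_mset v (add_mset u M') - {#u#} = add_mset v M'"
      by (simp add: add_mset_commute)
    show ?thesis using ne by (simp add: dd_def mulv_def M' e)
  next
    case False
    then show ?thesis using ne by (simp add: dd_def mulv_def)
  qed
qed

lemma dd_mult_eq: "dd v (mulv v p) M = mulv v (dd v p) M + p M"
proof (cases "v \<in># M")
  case True
  then obtain M' where M': "M = add_mset v M'" by (metis mset_add)
  show ?thesis by (simp add: M' dd_def mulv_def algebra_simps)
next
  case False
  then have "count M v = 0" by (simp add: not_in_iff)
  then show ?thesis using False by (simp add: dd_def mulv_def)
qed
lemma dd_dd: "dd u (dd v p) = dd v (dd u p)"
proof (rule ext)
  fix M
  show "dd u (dd v p) M = dd v (dd u p) M"
  proof (cases "u = v")
    case False
    have e: "add_mset u (add_mset v M) = add_mset v (add_mset u M)" by (rule add_mset_commute)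
    have 1: "dd u (dd v p) M = of_nat (count M u + 1) * (of_nat (count M v + 1) * p (add_mset v (add_mset u M)))"
      using False by (simp add: dd_def del: of_nat_add of_nat_Suc)
    have 2: "dd v (dd u p) M = of_nat (count M v + 1) * (of_nat (count M u + 1) * p (add_mset u (add_mset v M)))"
      using False by (simp add: dd_def del: of_nat_add of_nat_Suc)
    show ?thesis unfolding 1 2 e by (rule mult.left_commute)
  qed simp
qed

fun kk :: "(nat \<Rightarrow> complex) \<Rightarrow> (nat \<Rightarrow> complex) \<Rightarrow> gen \<Rightarrow> complex" where
  "kk lam mu (A r) = (if r \<ge> 0 then lam (nat r) else 0)"
| "kk lam mu (As s) = (if s \<ge> 1 then mu (nat s) else 0)"
fun ss :: "gen \<Rightarrow> complex" where
  "ss (A r) = 1"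
| "ss (As s) = (if s \<ge> 1 then -1 else 1)"
fun opr :: "gen \<Rightarrow> poly \<Rightarrow> poly" where
  "opr (A r) = (if r \<ge> 0 then dd (As (-r)) else mulv (A r))"
| "opr (As s) = (if s \<ge> 1 then dd (A (-s)) else mulv (As s))"

definition rho :: "(nat \<Rightarrow> complex) \<Rightarrow> (nat \<Rightarrow> complex) \<Rightarrow> gen \<Rightarrow> poly \<Rightarrow> poly" where
  "rho lam mu g p = (\<lambda>M. kk lam mu g * p M + ss g * opr g p M)"

lemma dd_lin: "dd u (\<lambda>M. a * p M + b * q M) M = a * dd u p M + b * dd u q M"
  by (simp add: dd_def algebra_simps)
lemma mulv_lin: "mulv u (\<lambda>M. a * p M + b * q M) M = a * mulv u p M + b * mulv u q M"
  by (simp add: mulv_def)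
lemma opr_lin: "opr g (\<lambda>M. a * p M + b * q M) M = a * opr g p M + b * opr g q M"
  by (cases g) (auto simp: dd_lin mulv_lin)
lemma dd_sum: "dd u (\<lambda>M. \<Sum>i\<in>S. c i * q i M) M = (\<Sum>i\<in>S. c i * dd u (q i) M)"
  by (simp add: dd_def sum_distrib_left mult.left_commute)
lemma mulv_sum: "mulv u (\<lambda>M. \<Sum>i\<in>S. c i * q i M) M = (\<Sum>i\<in>S. c i * mulv u (q i) M)"
  by (simp add: mulv_def)
lemma opr_sum: "opr g (\<lambda>M. \<Sum>i\<in>S. c i * q i M) M = (\<Sum>i\<in>S. c i * opr g (q i) M)"
  by (cases g) (auto simp: dd_sum mulv_sum)
lemma rho_lin: "rho lam mu g (\<lambda>M. a * p M + b * q M) M = a * rho lam mu g p M + b * rho lam mu g q M"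
  unfolding rho_def opr_lin by (simp add: ring_distribs mult.left_commute)
lemma rho_sum: "rho lam mu g (\<lambda>M. \<Sum>i\<in>S. c i * q i M) M = (\<Sum>i\<in>S. c i * rho lam mu g (q i) M)"
  unfolding rho_def opr_sum by (simp add: sum_distrib_left sum.distrib ring_distribs mult.left_commute)
lemma rho_zero: "rho lam mu g (\<lambda>M. 0) = (\<lambda>M. 0)"
  by (cases g) (simp_all add: rho_def fun_eq_iff dd_def mulv_def)

lemma rho_comm: "rho lam mu g (rho lam mu h p) M = rho lam mu h (rho lam mu g p) M
   + ss g * ss h * (opr g (opr h p) M - opr h (opr g p) M)"
  unfolding rho_def opr_lin by (simp add: algebra_simps)

lemma rho_AA: "rho lam mu (A r) (rho lam mu (A s) p) M = rho lam mu (A s) (rho lam mu (A r) p) M"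
  by (simp add: rho_comm[of _ _ "A r"] dd_dd mult_mult dd_mult_ne)
lemma rho_SS: "rho lam mu (As r) (rho lam mu (As s) p) M = rho lam mu (As s) (rho lam mu (As r) p) M"
  by (simp add: rho_comm[of _ _ "As r"] dd_dd mult_mult dd_mult_ne)
lemma rho_AS: "rho lam mu (A r) (rho lam mu (As s) p) M = rho lam mu (As s) (rho lam mu (A r) p) M
   + (if r + s = 0 then 1 else 0) * p M"
proof -
  have "opr (A r) (opr (As s) p) M - opr (As s) (opr (A r) p) M = ss (As s) * (if r + s = 0 then 1 else 0) * p M"
  proof (cases "r \<ge> 0"; cases "s \<ge> 1")
    assume "r \<ge> 0" "s \<ge> 1" then show ?thesis by (simp add: dd_dd)
  next
    assume a: "r \<ge> 0" "\<not> s \<ge> 1"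
    show ?thesis
    proof (cases "r + s = 0")
      case True
      then have r: "s = -r" by simp
      show ?thesis using a dd_mult_eq[of "As (-r)" p M] by (simp add: r)
    next
      case False
      then have "As s \<noteq> As (-r)" by simp
      then show ?thesis using a dd_mult_ne[of "As s" "As (-r)" p] by simp
    qed
  next
    assume a: "\<not> r \<ge> 0" "s \<ge> 1"
    show ?thesis
    proof (cases "r + s = 0")
      case True
      then have r: "r = -s" by simp
      show ?thesis using a dd_mult_eq[of "A (-s)" p M] by (simp add: r)
    next
      case False
      then have "A r \<noteq> A (-s)" by simp
      then show ?thesis using a dd_mult_ne[of "A r" "A (-s)" p] by simp
    qed
  next
    assume "\<not> r \<ge> 0" "\<not> s \<ge> 1" then show ?thesis by (simp add: mult_mult)
  qed
  note X = this
  have sq: "ss (As s) * ss (As s) = 1" by simp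
  have rc: "rho lam mu (A r) (rho lam mu (As s) p) M = rho lam mu (As s) (rho lam mu (A r) p) M
   + ss (A r) * ss (As s) * (opr (A r) (opr (As s) p) M - opr (As s) (opr (A r) p) M)"
    by (rule rho_comm)
  show ?thesis unfolding rc X using sq by (simp add: algebra_simps)
qed




fun rhow :: "(nat \<Rightarrow> complex) \<Rightarrow> (nat \<Rightarrow> complex) \<Rightarrow> gen list \<Rightarrow> poly \<Rightarrow> poly" where
  "rhow lam mu [] p = p" | "rhow lam mu (g # w) p = rho lam mu g (rhow lam mu w p)"

lemma rhow_append: "rhow lam mu (w @ [x]) p = rhow lam mu w (rho lam mu x p)"
  by (induction w) auto

definition Pi :: "(nat \<Rightarrow> complex) \<Rightarrow> (nat \<Rightarrow> complex) \<Rightarrow> felem \<Rightarrow> poly \<Rightarrow> poly" where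
  "Pi lam mu f p = (\<lambda>M. \<Sum>w\<in>supp f. f w * rhow lam mu w p M)"

lemma Pi_eq: "finite S \<Longrightarrow> supp f \<subseteq> S \<Longrightarrow> Pi lam mu f p M = (\<Sum>w\<in>S. f w * rhow lam mu w p M)"
  unfolding Pi_def by (rule sum.mono_neutral_left) (auto simp: supp_def)

lemma FA_comb: "f \<in> FA \<Longrightarrow> g \<in> FA \<Longrightarrow> (\<lambda>v. a * f v + b * g v) \<in> FA"
  by (rule supp_sub_FA[of "supp f \<union> supp g"]) (auto simp: FA_iff supp_def)

lemma Pi_comb:
  assumes "f \<in> FA" "g \<in> FA"
  shows "Pi lam mu (\<lambda>v. a * f v + b * g v) p M = a * Pi lam mu f p M + b * Pi lam mu g p M"
proof -
  let ?S = "supp f \<union> supp g"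
  have fin: "finite ?S" using assms by (auto simp: FA_iff)
  have "Pi lam mu (\<lambda>v. a * f v + b * g v) p M = (\<Sum>w\<in>?S. (a * f w + b * g w) * rhow lam mu w p M)"
    by (rule Pi_eq[OF fin]) (auto simp: supp_def)
  also have "\<dots> = a * (\<Sum>w\<in>?S. f w * rhow lam mu w p M) + b * (\<Sum>w\<in>?S. g w * rhow lam mu w p M)"
    by (simp add: sum_distrib_left sum.distrib algebra_simps)
  also have "(\<Sum>w\<in>?S. f w * rhow lam mu w p M) = Pi lam mu f p M"
    by (rule Pi_eq[OF fin, symmetric]) auto
  also have "(\<Sum>w\<in>?S. g w * rhow lam mu w p M) = Pi lam mu g p M"
    by (rule Pi_eq[OF fin, symmetric]) auto
  finally show ?thesis .
qed

lemma Pi_comb':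
  assumes "f \<in> FA" "g \<in> FA" "\<And>v. h v = a * f v + b * g v"
  shows "Pi lam mu h p M = a * Pi lam mu f p M + b * Pi lam mu g p M"
proof -
  have "h = (\<lambda>v. a * f v + b * g v)" using assms(3) by (simp add: fun_eq_iff)
  then show ?thesis using Pi_comb[OF assms(1,2)] by simp
qed

lemma Pi_mon: "Pi lam mu (mon w) p M = rhow lam mu w p M"
proof -
  have "Pi lam mu (mon w) p M = (\<Sum>v\<in>{w}. mon w v * rhow lam mu v p M)"
    by (rule Pi_eq) (auto simp: supp_def mon_def)
  then show ?thesis by (simp add: mon_def)
qed

lemma Pi_zero: "Pi lam mu (\<lambda>v. 0) p M = 0"
  by (simp add: Pi_def supp_def)

lemma Pi_lmul:
  assumes "f \<in> FA"
  shows "Pi lam mu (lmul x f) p M = rho lam mu x (Pi lam mu f p) M"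
proof -
  have fin: "finite (supp f)" using assms by (simp add: FA_iff)
  have "Pi lam mu (lmul x f) p M = (\<Sum>w\<in>Cons x ` supp f. lmul x f w * rhow lam mu w p M)"
    by (rule Pi_eq[OF _ supp_lmul]) (use fin in auto)
  also have "\<dots> = (\<Sum>w\<in>supp f. f w * rho lam mu x (rhow lam mu w p) M)"
    by (subst sum.reindex) (auto simp: lmul_def)
  also have "\<dots> = rho lam mu x (\<lambda>M. \<Sum>w\<in>supp f. f w * rhow lam mu w p M) M"
    by (rule rho_sum[symmetric])
  finally show ?thesis by (simp add: Pi_def)
qed

lemma Pi_rmul:
  assumes "f \<in> FA"
  shows "Pi lam mu (rmul x f) p M = Pi lam mu f (rho lam mu x p) M"
proof -
  have fin: "finite (supp f)" using assms by (simp add: FA_iff)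
  have "Pi lam mu (rmul x f) p M = (\<Sum>w\<in>(\<lambda>w. w @ [x]) ` supp f. rmul x f w * rhow lam mu w p M)"
    by (rule Pi_eq[OF _ supp_rmul]) (use fin in auto)
  also have "\<dots> = (\<Sum>w\<in>supp f. f w * rhow lam mu w (rho lam mu x p) M)"
    by (subst sum.reindex) (auto simp: rmul_def inj_on_def rhow_append)
  finally show ?thesis by (simp add: Pi_def)
qed

lemma Pi_diff2:
  "Pi lam mu (\<lambda>v. mon a v - mon b v) p M = rhow lam mu a p M - rhow lam mu b p M"
proof -
  have "Pi lam mu (\<lambda>v. mon a v - mon b v) p M = 1 * Pi lam mu (mon a) p M + (-1) * Pi lam mu (mon b) p M"
    by (rule Pi_comb'[OF FA_mon FA_mon]) simp
  then show ?thesis by (simp add: Pi_mon)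
qed

lemma FA_diff2: "(\<lambda>v. mon a v - mon b v) \<in> FA"
  by (rule supp_sub_FA[of "{a,b}"]) (auto simp: supp_def mon_def)

lemma Pi_diff3:
  "Pi lam mu (\<lambda>v. mon a v - mon b v - c * mon d v) p M = rhow lam mu a p M - rhow lam mu b p M - c * rhow lam mu d p M"
proof -
  have "Pi lam mu (\<lambda>v. mon a v - mon b v - c * mon d v) p M = 1 * Pi lam mu (\<lambda>v. mon a v - mon b v) p M + (-c) * Pi lam mu (mon d) p M"
    by (rule Pi_comb'[OF FA_diff2 FA_mon]) simp
  then show ?thesis by (simp add: Pi_mon Pi_diff2)
qed

lemma weylJ_Pi: "f \<in> weylJ \<Longrightarrow> Pi lam mu f p M = 0"
proof (induction arbitrary: p M rule: weylJ.induct)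
  case (rel_aa r s) then show ?case by (simp add: Pi_diff2 rho_AA)
next
  case (rel_ss r s) then show ?case by (simp add: Pi_diff2 rho_SS)
next
  case (rel_as r s) then show ?case by (simp add: Pi_diff3 rho_AS)
next
  case zero then show ?case by (rule Pi_zero)
next
  case (add f g)
  have "Pi lam mu (fadd f g) p M = 1 * Pi lam mu f p M + 1 * Pi lam mu g p M"
    by (rule Pi_comb'[OF weylJ_FA weylJ_FA]) (use add in \<open>simp_all add: fadd_def\<close>)
  then show ?case using add by simp
next
  case (scale f c)
  have "Pi lam mu (fscale c f) p M = c * Pi lam mu f p M + 0 * Pi lam mu f p M"
    by (rule Pi_comb'[OF weylJ_FA weylJ_FA]) (use scale in \<open>simp_all add: fscale_def\<close>)
  then show ?case using scale by simp
next
  case (left f x)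
  have "Pi lam mu f p = (\<lambda>M. 0)" using left by auto
  then show ?case using left by (simp add: Pi_lmul weylJ_FA rho_zero)
next
  case (right f x)
  then show ?case by (simp add: Pi_rmul weylJ_FA)
qed

definition n0 :: poly where "n0 = (\<lambda>M. if M = {#} then 1 else 0)"

lemma dd_n0: "dd u n0 = (\<lambda>M. 0)"
  by (simp add: dd_def n0_def fun_eq_iff)

lemma whitL_Pi: "f \<in> whitL lam mu \<Longrightarrow> Pi lam mu f n0 M = 0"
proof (induction arbitrary: M rule: whitL.induct)
  case (weyl f) then show ?case by (rule weylJ_Pi)
next
  case (gen_a i)
  have "Pi lam mu (\<lambda>v. mon [A (int i)] v - lam i * mon [] v) n0 M
     = 1 * Pi lam mu (mon [A (int i)]) n0 M + (- lam i) * Pi lam mu (mon []) n0 M"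
    by (rule Pi_comb'[OF FA_mon FA_mon]) simp
  then show ?case by (simp add: Pi_mon rho_def dd_n0)
next
  case (gen_as j)
  have "Pi lam mu (\<lambda>v. mon [As (int j)] v - mu j * mon [] v) n0 M
     = 1 * Pi lam mu (mon [As (int j)]) n0 M + (- mu j) * Pi lam mu (mon []) n0 M"
    by (rule Pi_comb'[OF FA_mon FA_mon]) simp
  then show ?case using gen_as by (simp add: Pi_mon rho_def dd_n0)
next
  case (add f g)
  have "Pi lam mu (fadd f g) n0 M = 1 * Pi lam mu f n0 M + 1 * Pi lam mu g n0 M"
    by (rule Pi_comb'[OF whitL_FA whitL_FA]) (use add in \<open>simp_all add: fadd_def\<close>)
  then show ?case using add by simp
next
  case (scale f c)
  have "Pi lam mu (fscale c f) n0 M = c * Pi lam mu f n0 M + 0 * Pi lam mu f n0 M"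
    by (rule Pi_comb'[OF whitL_FA whitL_FA]) (use scale in \<open>simp_all add: fscale_def\<close>)
  then show ?case using scale by simp
next
  case (left f x)
  have "Pi lam mu f n0 = (\<lambda>M. 0)" using left by auto
  then show ?case using left by (simp add: Pi_lmul whitL_FA rho_zero)
qed




fun eps :: "gen \<Rightarrow> complex" where "eps (A r) = 1" | "eps (As s) = -1"

definition charge :: "gen multiset \<Rightarrow> complex" where
  "charge M = sum_mset (image_mset eps M)"

lemma charge_add[simp]: "charge (add_mset v M) = eps v + charge M"
  by (simp add: charge_def)
lemma charge_empty[simp]: "charge {#} = 0"
  by (simp add: charge_def)

fun coef :: "(nat \<Rightarrow> complex) \<Rightarrow> (nat \<Rightarrow> complex) \<Rightarrow> gen \<Rightarrow> complex" where
  "coef lam mu (A r) = (if r < 0 then mu (nat (-r)) else 0)"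
| "coef lam mu (As s) = (if s \<le> 0 then lam (nat (-s)) else 0)"

definition GG :: "nat \<Rightarrow> nat \<Rightarrow> gen set" where
  "GG n m = (\<lambda>i. A (- int i)) ` {1..m} \<union> (\<lambda>j. As (- int j)) ` {..n}"

lemma GG_fin: "finite (GG n m)" by (simp add: GG_def)

definition Qop :: "(nat \<Rightarrow> complex) \<Rightarrow> (nat \<Rightarrow> complex) \<Rightarrow> nat \<Rightarrow> nat \<Rightarrow> poly \<Rightarrow> poly" where
  "Qop lam mu n m p = (\<lambda>M. charge M * p M - (\<Sum>u\<in>GG n m. coef lam mu u * mulv u p M))"

lemma coefG:
  assumes "\<forall>i>n. lam i = 0" "\<forall>j>m. mu j = 0" "v \<notin> GG n m"
  shows "coef lam mu v = 0"
proof (cases v)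
  case (A r)
  show ?thesis
  proof (cases "r < 0")
    case True
    have "nat (-r) \<notin> {1..m}"
    proof
      assume "nat (-r) \<in> {1..m}"
      then have "v \<in> GG n m" using A True unfolding GG_def
        by (intro UnI1 image_eqI[of _ _ "nat (-r)"]) auto
      with assms(3) show False by simp
    qed
    then show ?thesis using A True assms(2) by auto
  qed (simp add: A)
next
  case (As s)
  show ?thesis
  proof (cases "s \<le> 0")
    case True
    have "nat (-s) \<notin> {..n}"
    proof
      assume "nat (-s) \<in> {..n}"
      then have "v \<in> GG n m" using As True unfolding GG_def
        by (intro UnI2 image_eqI[of _ _ "nat (-s)"]) auto
      with assms(3) show False by simp
    qed
    then show ?thesis using As True assms(1) by auto
  qed (simp add: As)
qed

lemma sum_delta_coef:
  assumes "\<forall>i>n. lam i = 0" "\<forall>j>m. mu j = 0"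
  shows "(\<Sum>u\<in>GG n m. coef lam mu u * (if u = v then c else 0)) = coef lam mu v * c"
proof (cases "v \<in> GG n m")
  case True
  have "(\<Sum>u\<in>GG n m. coef lam mu u * (if u = v then c else 0)) = (\<Sum>u\<in>GG n m. if u = v then coef lam mu v * c else 0)"
    by (rule sum.cong) auto
  then show ?thesis using True GG_fin by simp
next
  case False
  then show ?thesis using coefG[OF assms False] by (auto intro!: sum.neutral)
qed

lemma Qop_lin: "Qop lam mu n m (\<lambda>M. a * p M + b * q M) M = a * Qop lam mu n m p M + b * Qop lam mu n m q M"
  by (simp add: Qop_def mulv_lin sum_distrib_left sum.distrib algebra_simps sum_subtractf)

lemma Qop_mulv: "Qop lam mu n m (mulv v p) M = mulv v (Qop lam mu n m p) M + eps v * mulv v p M"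
proof (cases "v \<in># M")
  case True
  then obtain M' where M: "M = add_mset v M'" by (metis mset_add)
  have "(\<Sum>u\<in>GG n m. coef lam mu u * mulv u (mulv v p) M) = (\<Sum>u\<in>GG n m. coef lam mu u * mulv u p M')"
  proof (intro sum.cong refl)
    fix u
    have "mulv u (mulv v p) M = mulv v (mulv u p) M" by (rule fun_cong[OF mult_mult])
    also have "\<dots> = mulv u p M'" by (simp add: mulv_def M)
    finally show "coef lam mu u * mulv u (mulv v p) M = coef lam mu u * mulv u p M'" by simp
  qed
  note sf = this
  have a: "mulv v p M = p M'" by (simp add: mulv_def M)
  have b: "mulv v (Qop lam mu n m p) M = Qop lam mu n m p M'" by (simp add: mulv_def M)
  have c: "charge M = eps v + charge M'" by (simp add: M)
  show ?thesis unfolding b by (simp only: Qop_def a sf c) (simp add: algebra_simps)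
next
  case False
  have "(\<Sum>u\<in>GG n m. coef lam mu u * mulv u (mulv v p) M) = 0"
  proof (intro sum.neutral ballI)
    fix u
    have "mulv u (mulv v p) M = mulv v (mulv u p) M" by (rule fun_cong[OF mult_mult])
    also have "\<dots> = 0" by (simp add: mulv_def False)
    finally show "coef lam mu u * mulv u (mulv v p) M = 0" by simp
  qed
  then show ?thesis by (simp add: Qop_def mulv_def False)
qed

lemma Qop_dd:
  assumes "\<forall>i>n. lam i = 0" "\<forall>j>m. mu j = 0"
  shows "Qop lam mu n m (dd v p) M = dd v (Qop lam mu n m p) M - eps v * dd v p M + coef lam mu v * p M"
proof -
  let ?c = "of_nat (count M v + 1) :: complex"
  have h: "?c * mulv u p (add_mset v M) = mulv u (dd v p) M + (if u = v then p M else 0)" for u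
  proof (cases "u = v")
    case True then show ?thesis using dd_mult_eq[of v p M] by (simp add: dd_def)
  next
    case False then show ?thesis using dd_mult_ne[OF False, of p] by (simp add: dd_def fun_eq_iff)
  qed
  have "dd v (Qop lam mu n m p) M = ?c * (charge (add_mset v M) * p (add_mset v M))
      - (\<Sum>u\<in>GG n m. coef lam mu u * (?c * mulv u p (add_mset v M)))"
    by (simp add: dd_def Qop_def sum_distrib_left algebra_simps)
  also have "\<dots> = (eps v + charge M) * dd v p M
      - (\<Sum>u\<in>GG n m. coef lam mu u * mulv u (dd v p) M + coef lam mu u * (if u = v then p M else 0))"
  proof -
    have s1: "(\<Sum>u\<in>GG n m. coef lam mu u * (?c * mulv u p (add_mset v M)))
       = (\<Sum>u\<in>GG n m. coef lam mu u * mulv u (dd v p) M + coef lam mu u * (if u = v then p M else 0))"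
      by (intro sum.cong refl) (simp only: h distrib_left)
    have s2: "?c * (charge (add_mset v M) * p (add_mset v M)) = (eps v + charge M) * dd v p M"
      by (simp add: dd_def)
    show ?thesis unfolding s1 s2 ..
  qed
  also have "\<dots> = (eps v + charge M) * dd v p M
      - (\<Sum>u\<in>GG n m. coef lam mu u * mulv u (dd v p) M) - coef lam mu v * p M"
    by (simp add: sum.distrib sum_delta_coef[OF assms])
  finally show ?thesis by (simp add: Qop_def algebra_simps)
qed

lemma Qop_rho:
  assumes "\<forall>i>n. lam i = 0" "\<forall>j>m. mu j = 0"
  shows "Qop lam mu n m (rho lam mu g p) M = rho lam mu g (Qop lam mu n m p) M + eps g * rho lam mu g p M"
proof -
  have "Qop lam mu n m (rho lam mu g p) M = kk lam mu g * Qop lam mu n m p M + ss g * Qop lam mu n m (opr g p) M"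
    unfolding rho_def by (rule Qop_lin)
  moreover have "rho lam mu g (Qop lam mu n m p) M = kk lam mu g * Qop lam mu n m p M + ss g * opr g (Qop lam mu n m p) M"
    by (simp add: rho_def)
  moreover have "ss g * Qop lam mu n m (opr g p) M = ss g * opr g (Qop lam mu n m p) M + eps g * rho lam mu g p M"
  proof (cases g)
    case (A r)
    then show ?thesis by (cases "r \<ge> 0") (auto simp: Qop_mulv Qop_dd[OF assms] rho_def algebra_simps)
  next
    case (As s)
    then show ?thesis by (cases "s \<ge> 1") (auto simp: Qop_mulv Qop_dd[OF assms] rho_def algebra_simps)
  qed
  ultimately show ?thesis by simp
qed

lemma Qop_rho2:
  assumes "\<forall>i>n. lam i = 0" "\<forall>j>m. mu j = 0" "eps a + eps b = 0"
  shows "Qop lam mu n m (rho lam mu a (rho lam mu b p)) M = rho lam mu a (rho lam mu b (Qop lam mu n m p)) M"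
proof -
  have e: "Qop lam mu n m (rho lam mu b p) = (\<lambda>M. 1 * rho lam mu b (Qop lam mu n m p) M + eps b * rho lam mu b p M)"
    by (simp add: fun_eq_iff Qop_rho[OF assms(1,2)])
  have "Qop lam mu n m (rho lam mu a (rho lam mu b p)) M
     = rho lam mu a (Qop lam mu n m (rho lam mu b p)) M + eps a * rho lam mu a (rho lam mu b p) M"
    by (rule Qop_rho[OF assms(1,2)])
  also have "\<dots> = rho lam mu a (rho lam mu b (Qop lam mu n m p)) M + (eps a + eps b) * rho lam mu a (rho lam mu b p) M"
    unfolding e rho_lin by (simp add: algebra_simps)
  finally show ?thesis using assms(3) by simp
qed




definition pfin :: "poly \<Rightarrow> bool" where "pfin p \<longleftrightarrow> finite {M. p M \<noteq> 0}"

lemma pfin_mulv: "pfin p \<Longrightarrow> pfin (mulv u p)"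
  unfolding pfin_def
proof (rule finite_subset[of _ "add_mset u ` {M. p M \<noteq> 0}"])
  show "{M. mulv u p M \<noteq> 0} \<subseteq> add_mset u ` {M. p M \<noteq> 0}"
  proof
    fix M assume "M \<in> {M. mulv u p M \<noteq> 0}"
    then have "u \<in># M" "p (M - {#u#}) \<noteq> 0" by (auto simp: mulv_def split: if_splits)
    then show "M \<in> add_mset u ` {M. p M \<noteq> 0}" by (intro image_eqI[of _ _ "M - {#u#}"]) auto
  qed
qed auto

lemma pfin_dd: "pfin p \<Longrightarrow> pfin (dd u p)"
  unfolding pfin_def
proof (rule finite_subset[of _ "(\<lambda>M. M - {#u#}) ` {M. p M \<noteq> 0}"])
  show "{M. dd u p M \<noteq> 0} \<subseteq> (\<lambda>M. M - {#u#}) ` {M. p M \<noteq> 0}"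
  proof
    fix M assume "M \<in> {M. dd u p M \<noteq> 0}"
    then have "p (add_mset u M) \<noteq> 0" by (auto simp: dd_def)
    then show "M \<in> (\<lambda>M. M - {#u#}) ` {M. p M \<noteq> 0}" by (intro image_eqI[of _ _ "add_mset u M"]) auto
  qed
qed auto

lemma pfin_lin: "pfin p \<Longrightarrow> pfin q \<Longrightarrow> pfin (\<lambda>M. a * p M + b * q M)"
  unfolding pfin_def by (rule finite_subset[of _ "{M. p M \<noteq> 0} \<union> {M. q M \<noteq> 0}"]) auto

lemma pfin_opr: "pfin p \<Longrightarrow> pfin (opr g p)"
  by (cases g) (auto intro: pfin_dd pfin_mulv)

lemma pfin_rho: "pfin p \<Longrightarrow> pfin (rho lam mu g p)"
  unfolding rho_def by (intro pfin_lin pfin_opr)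

lemma pfin_n0: "pfin n0"
  unfolding pfin_def n0_def by (rule finite_subset[of _ "{{#}}"]) auto

lemma pfin_zero: "pfin (\<lambda>M. 0)" by (simp add: pfin_def)

lemma Qop_zero: "Qop lam mu n m (\<lambda>M. 0) M = 0"
  by (simp add: Qop_def mulv_def)

lemma Pi_Eact:
  assumes "f \<in> FA"
  shows "\<exists>a b. eps a + eps b = 0 \<and> (\<forall>p M. Pi lam mu (Eact i j f) p M = rho lam mu a (rho lam mu b (Pi lam mu f p)) M)"
proof (cases "- i \<ge> 0 \<and> j \<le> 0")
  case True
  have "Pi lam mu (Eact i j f) p M = rho lam mu (As j) (rho lam mu (A (-i)) (Pi lam mu f p)) M" for p M
  proof -
    have e: "Pi lam mu (lmul (A (-i)) f) p = rho lam mu (A (-i)) (Pi lam mu f p)"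
      using Pi_lmul[OF assms] by (simp add: fun_eq_iff)
    have E: "Eact i j f = lmul (As j) (lmul (A (-i)) f)" using True by (simp add: Eact_def)
    show ?thesis unfolding E by (simp add: Pi_lmul FA_lmul assms e)
  qed
  then show ?thesis by (intro exI[of _ "As j"] exI[of _ "A (-i)"]) auto
next
  case False
  have "Pi lam mu (Eact i j f) p M = rho lam mu (A (-i)) (rho lam mu (As j) (Pi lam mu f p)) M" for p M
  proof -
    have e: "Pi lam mu (lmul (As j) f) p = rho lam mu (As j) (Pi lam mu f p)"
      using Pi_lmul[OF assms] by (simp add: fun_eq_iff)
    have E: "Eact i j f = lmul (A (-i)) (lmul (As j) f)" using False unfolding Eact_def by auto
    show ?thesis unfolding E by (simp add: Pi_lmul FA_lmul assms e)
  qed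
  then show ?thesis by (intro exI[of _ "A (-i)"] exI[of _ "As j"]) auto
qed

lemma degree_arg:
  assumes "\<forall>i>n. lam i = 0" "\<forall>j>m. mu j = 0" "k \<le> n" "lam k \<noteq> 0"
    and "pfin q" and Q: "\<forall>M. Qop lam mu n m q M = n0 M"
  shows False
proof -
  define v where "v = As (- int k)"
  have vG: "v \<in> GG n m" using assms(3) unfolding GG_def v_def by auto
  have cv: "coef lam mu v = lam k" by (simp add: v_def)
  let ?S = "{M. q M \<noteq> 0}"
  have fin: "finite ?S" using assms(5) by (simp add: pfin_def)
  show False
  proof (cases "?S = {}")
    case True
    then have "q = (\<lambda>M. 0)" by auto
    then show False using Q Qop_zero[of lam mu n m "{#}"] by (auto simp: n0_def)
  next
    case False
    define d where "d = Max ((\<lambda>M. count M v) ` ?S)"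
    have dmax: "q M \<noteq> 0 \<Longrightarrow> count M v \<le> d" for M unfolding d_def using fin by auto
    have "d \<in> (\<lambda>M. count M v) ` ?S"
      unfolding d_def using Max_in[of "(\<lambda>M. count M v) ` ?S"] fin False by blast
    then obtain M0 where M0: "q M0 \<noteq> 0" "count M0 v = d" by auto
    define M1 where "M1 = add_mset v M0"
    have qM1: "q M1 = 0" using dmax[of M1] M0 by (auto simp: M1_def)
    have mu1: "mulv u q M1 = (if u = v then q M0 else 0)" for u
    proof (cases "u = v")
      case True then show ?thesis by (simp add: mulv_def M1_def)
    next
      case False
      have "count (M1 - {#u#}) v = d + 1" using False M0 by (simp add: M1_def)
      then have "q (M1 - {#u#}) = 0" using dmax[of "M1 - {#u#}"] by auto
      then show ?thesis using False by (simp add: mulv_def)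
    qed
    have "Qop lam mu n m q M1 = - (lam k * q M0)"
      by (simp add: Qop_def qM1 mu1 sum_delta_coef[OF assms(1,2)] cv)
    moreover have "n0 M1 = 0" by (simp add: n0_def M1_def)
    ultimately show False using Q M0 assms(4) by auto
  qed
qed

definition f0 :: "(nat \<Rightarrow> complex) \<Rightarrow> (nat \<Rightarrow> complex) \<Rightarrow> nat \<Rightarrow> nat \<Rightarrow> felem" where
  "f0 lam mu n m = (\<lambda>w. - (\<Sum>u\<in>GG n m. coef lam mu u * mon [u] w))"

lemma f0_supp: "supp (f0 lam mu n m) \<subseteq> (\<lambda>u. [u]) ` GG n m"
proof
  fix w assume "w \<in> supp (f0 lam mu n m)"
  then have "(\<Sum>u\<in>GG n m. coef lam mu u * mon [u] w) \<noteq> 0" by (simp add: supp_def f0_def)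
  then obtain u where "u \<in> GG n m" "mon [u] w \<noteq> 0" by (metis (no_types, lifting) mult_zero_right sum.neutral)
  then show "w \<in> (\<lambda>u. [u]) ` GG n m" by (auto simp: mon_def split: if_splits)
qed

lemma f0_FA: "f0 lam mu n m \<in> FA"
  by (rule supp_sub_FA[OF _ f0_supp]) (simp add: GG_fin)

lemma f0_val:
  assumes "\<forall>i>n. lam i = 0" "\<forall>j>m. mu j = 0"
  shows "f0 lam mu n m [u] = - coef lam mu u"
proof -
  have "(\<Sum>u'\<in>GG n m. coef lam mu u' * mon [u'] [u]) = (\<Sum>u'\<in>GG n m. coef lam mu u' * (if u' = u then 1 else 0))"
    by (rule sum.cong) (auto simp: mon_def)
  then show ?thesis by (simp add: f0_def sum_delta_coef[OF assms])
qed

lemma rho_G_n0: "u \<in> GG n m \<Longrightarrow> rho lam mu u n0 M = mulv u n0 M"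
  by (auto simp: GG_def rho_def)

lemma Pi_f0:
  assumes "\<forall>i>n. lam i = 0" "\<forall>j>m. mu j = 0"
  shows "Pi lam mu (f0 lam mu n m) n0 M = Qop lam mu n m n0 M"
proof -
  have "Pi lam mu (f0 lam mu n m) n0 M = (\<Sum>w\<in>(\<lambda>u. [u]) ` GG n m. f0 lam mu n m w * rhow lam mu w n0 M)"
    by (rule Pi_eq[OF _ f0_supp]) (simp add: GG_fin)
  also have "\<dots> = (\<Sum>u\<in>GG n m. - coef lam mu u * mulv u n0 M)"
    by (subst sum.reindex) (auto simp: inj_on_def f0_val[OF assms] rho_G_n0 intro!: sum.cong)
  also have "\<dots> = Qop lam mu n m n0 M"
    by (simp add: Qop_def n0_def sum_negf)
  finally show ?thesis .
qed




theorem theorem6p3: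
  fixes n m :: nat and lam mu :: "nat \<Rightarrow> complex"
  assumes "m \<ge> 1"
    and "\<forall>i>n. lam i = 0" and "\<forall>j>m. mu j = 0"
    and "\<exists>i\<le>n. lam i \<noteq> 0" and "\<exists>j\<in>{1..m}. mu j \<noteq> 0"
  shows "cycsub lam mu = FA \<and>
         (\<exists>V. fsubspace V \<and> whitL lam mu \<subseteq> V \<and> V \<subseteq> FA \<and>
              (\<forall>i j. \<forall>f\<in>V. Eact i j f \<in> V) \<and>
              V \<noteq> whitL lam mu \<and> V \<noteq> FA)"
proof -
  obtain k where k: "k \<le> n" "lam k \<noteq> 0" using assms(4) by auto
  obtain l where l: "l \<ge> 1" "mu l \<noteq> 0" using assms(5) by auto
  note L = assms(2,3)
  have C: "cycsub lam mu = FA"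
  proof
    show "cycsub lam mu \<subseteq> FA" using cyc_FA by blast
    show "FA \<subseteq> cycsub lam mu" using FA_cyc all_mon_cyc[where lam=lam and k=k and mu=mu and l=l, OF k(2) l(2) l(1)] by blast
  qed
  define V where "V = {f \<in> FA. \<exists>q. pfin q \<and> (\<forall>M. Pi lam mu f n0 M = Qop lam mu n m q M)}"
  have sub: "fsubspace V"
    unfolding fsubspace_def
  proof (intro conjI ballI allI)
    show "(\<lambda>v. 0) \<in> V" unfolding V_def
      using FA_zero pfin_zero Pi_zero Qop_zero by fastforce
  next
    fix f g assume "f \<in> V" "g \<in> V"
    then obtain q1 q2 where f: "f \<in> FA" "pfin q1" "\<forall>M. Pi lam mu f n0 M = Qop lam mu n m q1 M"
      and g: "g \<in> FA" "pfin q2" "\<forall>M. Pi lam mu g n0 M = Qop lam mu n m q2 M"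
      unfolding V_def by blast
    have "Pi lam mu (fadd f g) n0 M = Qop lam mu n m (\<lambda>M. 1 * q1 M + 1 * q2 M) M" for M
    proof -
      have "Pi lam mu (fadd f g) n0 M = 1 * Pi lam mu f n0 M + 1 * Pi lam mu g n0 M"
        by (rule Pi_comb'[OF f(1) g(1)]) (simp add: fadd_def)
      then show ?thesis using f g by (simp only: Qop_lin)
    qed
    then show "fadd f g \<in> V" unfolding V_def
      using FA_fadd[OF f(1) g(1)] pfin_lin[OF f(2) g(2)] by blast
  next
    fix c f assume "f \<in> V"
    then obtain q1 where f: "f \<in> FA" "pfin q1" "\<forall>M. Pi lam mu f n0 M = Qop lam mu n m q1 M"
      unfolding V_def by blast
    have "Pi lam mu (fscale c f) n0 M = Qop lam mu n m (\<lambda>M. c * q1 M + 0 * q1 M) M" for M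
    proof -
      have "Pi lam mu (fscale c f) n0 M = c * Pi lam mu f n0 M + 0 * Pi lam mu f n0 M"
        by (rule Pi_comb'[OF f(1) f(1)]) (simp add: fscale_def)
      then show ?thesis using f by (simp only: Qop_lin)
    qed
    then show "fscale c f \<in> V" unfolding V_def
      using FA_fscale[OF f(1)] pfin_lin[OF f(2) f(2)] by blast
  qed
  have wV: "whitL lam mu \<subseteq> V"
  proof
    fix f assume "f \<in> whitL lam mu"
    then show "f \<in> V" unfolding V_def
      using whitL_FA whitL_Pi pfin_zero Qop_zero by fastforce
  qed
  have VFA: "V \<subseteq> FA" unfolding V_def by blast
  have inv: "\<forall>i j. \<forall>f\<in>V. Eact i j f \<in> V"
  proof (intro allI ballI)
    fix i j f assume "f \<in> V"
    then obtain q where f: "f \<in> FA" "pfin q" "\<forall>M. Pi lam mu f n0 M = Qop lam mu n m q M"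
      unfolding V_def by blast
    obtain a b where ab: "eps a + eps b = 0"
      "\<And>p M. Pi lam mu (Eact i j f) p M = rho lam mu a (rho lam mu b (Pi lam mu f p)) M"
      using Pi_Eact[OF f(1)] by blast
    have e: "Pi lam mu f n0 = Qop lam mu n m q" using f(3) by (simp add: fun_eq_iff)
    have "Pi lam mu (Eact i j f) n0 M = Qop lam mu n m (rho lam mu a (rho lam mu b q)) M" for M
      using ab(2) e Qop_rho2[OF L ab(1)] by simp
    moreover have "Eact i j f \<in> FA" using f(1) by (simp add: Eact_def FA_lmul)
    ultimately show "Eact i j f \<in> V" unfolding V_def
      using pfin_rho[OF pfin_rho[OF f(2)]] by blast
  qed
  have f0V: "f0 lam mu n m \<in> V" unfolding V_def
    using f0_FA Pi_f0[OF L] pfin_n0 by blast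
  have f0W: "f0 lam mu n m \<notin> whitL lam mu"
  proof
    assume "f0 lam mu n m \<in> whitL lam mu"
    then have "Pi lam mu (f0 lam mu n m) n0 {#As (- int k)#} = 0" by (rule whitL_Pi)
    moreover have "Qop lam mu n m n0 {#As (- int k)#} = - lam k"
    proof -
      have "mulv u n0 {#As (- int k)#} = (if u = As (- int k) then 1 else 0)" for u
        by (simp add: mulv_def n0_def)
      then show ?thesis by (simp add: Qop_def n0_def sum_delta_coef[OF L])
    qed
    ultimately show False using Pi_f0[OF L] k(2) by simp
  qed
  have monV: "mon [] \<notin> V"
  proof
    assume "mon [] \<in> V"
    then obtain q where q: "pfin q" "\<forall>M. Pi lam mu (mon []) n0 M = Qop lam mu n m q M"
      unfolding V_def by blast
    have "\<forall>M. Qop lam mu n m q M = n0 M" using q(2) by (simp add: Pi_mon)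
    then show False using degree_arg[OF L k(1) k(2) q(1)] by blast
  qed
  show ?thesis
    using C sub wV VFA inv f0V f0W monV FA_mon by blast
qed


end
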